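(* Let $n\ge 2$ and $k=2$. For any storage network with node set $\mathcal{N}=\{1,\dots,n\}$ and symmetric RTT function $\tau$, there exists an uncoded storage scheme $\mathcal{C}$ such that $L_{max}^{(i)}(\mathcal{C})=\lambda_{1}^{(i)}$ for every $i\in\mathcal{N}$ and $L_{avg}(\mathcal{C})=\frac{1}{2n}\sum_{i\in\mathcal{N}}\left(\lambda_0^{(i)}+\lambda_1^{(i)}\right)$; that is, $\mathcal{C}$ meets the lower bounds $L_{max}^{(i)}\ge\lambda_{k-1}^{(i)}$ and $L_{avg}\ge\frac{1}{kn}\sum_i\sum_{j=0}^{k-1}\lambda_j^{(i)}$, valid for all linear storage codes, with equality.
   Context: A storage network consists of $n$ nodes $\mathcal{N}=\{1,\dots,n\}$ and a round-trip-time function $\tau:\mathcal{N}\times\mathcal{N}\to\mathbb{R}_{\ge0}$ with $\tau(i,j)=\tau(j,i)$, $\tau(i,i)=0$, and $k$ information files $W_1,\dots,W_k$. An uncoded storage scheme stores at node $i$ one file $X_i=W_{\sigma(i)}$ for a map $\sigma:\mathcal{N}\to[k]$. The latency $l_j^{(i)}$ of node $i$ for file $W_j$ is $\min\{\tau(t,i): \sigma(t)=j\}$ (the least wait time after which some node storing $W_j$ is reachable). $L_{max}^{(i)}(\mathcal{C})=\max_{j\in[k]}l_j^{(i)}$ and $L_{avg}(\mathcal{C})=\frac{1}{kn}\sum_{i\in\mathcal{N}}\sum_{j\in[k]}l_j^{(i)}$. For node $i$, $\lambda_0^{(i)}\le\dots\le\lambda_{n-1}^{(i)}$ is the sorted list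 of $\{\tau(j,i):j\in\mathcal{N}\}$, so $\lambda_0^{(i)}=0$. *)

theory Defs
  imports "HOL-Analysis.Analysis"
begin

text \<open>Nodes are {1..n}; files are indexed by {1..k}. An uncoded storage scheme is
a map sigma from nodes to file indices.\<close>

definition uncoded_scheme :: "nat \<Rightarrow> nat \<Rightarrow> (nat \<Rightarrow> nat) \<Rightarrow> bool" where
  "uncoded_scheme n k \<sigma> \<longleftrightarrow> (\<forall>i\<in>{1..n}. \<sigma> i \<in> {1..k})"

definition latency :: "nat \<Rightarrow> (nat \<Rightarrow> nat \<Rightarrow> real) \<Rightarrow> (nat \<Rightarrow> nat) \<Rightarrow> nat \<Rightarrow> nat \<Rightarrow> real" where
  "latency n \<tau> \<sigma> j i = Min {\<tau> t i | t. t \<in> {1..n} \<and> \<sigma> t = j}"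

definition L_max :: "nat \<Rightarrow> nat \<Rightarrow> (nat \<Rightarrow> nat \<Rightarrow> real) \<Rightarrow> (nat \<Rightarrow> nat) \<Rightarrow> nat \<Rightarrow> real" where
  "L_max n k \<tau> \<sigma> i = Max ((\<lambda>j. latency n \<tau> \<sigma> j i) ` {1..k})"

definition L_avg :: "nat \<Rightarrow> nat \<Rightarrow> (nat \<Rightarrow> nat \<Rightarrow> real) \<Rightarrow> (nat \<Rightarrow> nat) \<Rightarrow> real" where
  "L_avg n k \<tau> \<sigma> = (\<Sum>i\<in>{1..n}. \<Sum>j\<in>{1..k}. latency n \<tau> \<sigma> j i) / (real k * real n)"

text \<open>lam n tau i m: the m-th smallest (0-indexed) element of the list of
tau(j,i), j = 1..n, with multiplicity.\<close>
definition lam :: "nat \<Rightarrow> (nat \<Rightarrow> nat \<Rightarrow> real) \<Rightarrow> nat \<Rightarrow> nat \<Rightarrow> real" where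
  "lam n \<tau> i m = sort (map (\<lambda>j. \<tau> j i) [1..<n+1]) ! m"

end

theory Submission
  imports Defs "HOL-Library.Multiset"
begin

definition near :: "nat set \<Rightarrow> (nat \<Rightarrow> nat \<Rightarrow> real) \<Rightarrow> nat \<Rightarrow> nat \<Rightarrow> bool" where
  "near V d i j \<longleftrightarrow> j \<in> V \<and> j \<noteq> i \<and> (\<forall>k\<in>V. k \<noteq> i \<longrightarrow> d j i \<le> d k i)"

lemma near_exists:
  assumes "finite V" "k \<in> V" "k \<noteq> i"
  shows "\<exists>j. near V d i j"
proof -
  let ?S = "V - {i}"
  have fin: "finite ((\<lambda>k. d k i) ` ?S)" using assms by auto
  have ne: "(\<lambda>k. d k i) ` ?S \<noteq> {}" using assms by auto
  define m where "m = Min ((\<lambda>k. d k i) ` ?S)"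
  have "m \<in> (\<lambda>k. d k i) ` ?S" unfolding m_def using Min_in[OF fin ne] .
  then obtain j where j0: "m = d j i" "j \<in> ?S" by (rule imageE)
  then have j: "j \<in> ?S" "d j i = Min ((\<lambda>k. d k i) ` ?S)" unfolding m_def by auto
  have "\<forall>k\<in>V. k \<noteq> i \<longrightarrow> d j i \<le> d k i"
    using j(2) Min_le[OF fin] by auto
  then show ?thesis using j(1) unfolding near_def by blast
qed

lemma coloring:
  assumes "finite V" "\<forall>x\<in>V. \<forall>y\<in>V. d x y = d y x"
  shows "\<exists>\<sigma>::nat\<Rightarrow>bool. \<forall>i\<in>V. (\<exists>k\<in>V. k \<noteq> i) \<longrightarrow> (\<exists>j. near V d i j \<and> \<sigma> j \<noteq> \<sigma> i)"
  using assms
proof (induction V rule: finite_psubset_induct)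
  case (psubset V)
  show ?case
  proof (cases "\<exists>v\<in>V. \<forall>i\<in>V. i \<noteq> v \<longrightarrow> (\<exists>k\<in>V. k \<noteq> i) \<longrightarrow> (\<exists>j. near V d i j \<and> j \<noteq> v)")
    case True
    then obtain v where v: "v \<in> V" and hv: "\<forall>i\<in>V. i \<noteq> v \<longrightarrow> (\<exists>k\<in>V. k \<noteq> i) \<longrightarrow> (\<exists>j. near V d i j \<and> j \<noteq> v)" by blast
    have h1: "V - {v} \<subset> V" using v by auto
    have h2: "\<forall>x\<in>V-{v}. \<forall>y\<in>V-{v}. d x y = d y x" using psubset.prems by blast
    have "\<exists>\<sigma>::nat\<Rightarrow>bool. \<forall>i\<in>V-{v}. (\<exists>k\<in>V-{v}. k \<noteq> i) \<longrightarrow> (\<exists>j. near (V-{v}) d i j \<and> \<sigma> j \<noteq> \<sigma> i)" using psubset.IH[OF h1 h2] by blast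
    then obtain \<sigma> :: "nat \<Rightarrow> bool" where
      \<sigma>: "\<forall>i\<in>V-{v}. (\<exists>k\<in>V-{v}. k \<noteq> i) \<longrightarrow> (\<exists>j. near (V-{v}) d i j \<and> \<sigma> j \<noteq> \<sigma> i)" by (elim exE)
    show ?thesis
    proof (cases "\<exists>k\<in>V. k \<noteq> v")
      case False
      then show ?thesis by (intro exI[of _ "\<lambda>_. True"]) metis
    next
      case True
      then obtain k where k: "k \<in> V" "k \<noteq> v" by blast
      obtain w where w: "near V d v w" using near_exists[OF psubset.hyps(1) k] by blast
      define \<sigma>' where "\<sigma>' = \<sigma>(v := \<not> \<sigma> w)"
      show ?thesis
      proof (intro exI[of _ \<sigma>'] ballI impI)
        fix i assume i: "i \<in> V" "\<exists>k\<in>V. k \<noteq> i"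
        show "\<exists>j. near V d i j \<and> \<sigma>' j \<noteq> \<sigma>' i"
        proof (cases "i = v")
          case True
          have "w \<noteq> v" using w unfolding near_def by auto
          then show ?thesis using True w unfolding \<sigma>'_def by auto
        next
          case False
          from hv i False obtain j where j: "near V d i j" "j \<noteq> v" by blast
          have "j \<in> V - {v}" "j \<noteq> i" using j unfolding near_def by auto
          then obtain j' where j': "near (V-{v}) d i j'" "\<sigma> j' \<noteq> \<sigma> i"
            using \<sigma> i False by blast
          have "near V d i j'"
          proof -
            have a1: "d j' i \<le> d j i" using j' \<open>j \<in> V - {v}\<close> \<open>j \<noteq> i\<close> unfolding near_def by blast
            have a2: "\<forall>k\<in>V. k \<noteq> i \<longrightarrow> d j i \<le> d k i" using j(1) unfolding near_def by blast
            have a3: "j' \<in> V" "j' \<noteq> i" using j'(1) unfolding near_def by auto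
            show ?thesis unfolding near_def using a1 a2 a3 by force
          qed
          moreover have "j' \<noteq> v" using j' unfolding near_def by auto
          ultimately show ?thesis using j' False unfolding \<sigma>'_def by auto
        qed
      qed
    qed
  next
    case False
    then have hB: "\<forall>v\<in>V. \<exists>i\<in>V. i \<noteq> v \<and> (\<exists>k\<in>V. k \<noteq> i) \<and> (\<forall>j. near V d i j \<longrightarrow> j = v)"
      by blast
    show ?thesis
    proof (cases "V = {}")
      case True
      then show ?thesis by (intro exI[of _ "\<lambda>_. True"]) simp
    next
      case False
      let ?P = "{(x, y). x \<in> V \<and> y \<in> V \<and> x \<noteq> y}"
      have finP: "finite ((\<lambda>(x,y). d x y) ` ?P)"
        using psubset.hyps(1) by (auto intro: finite_subset[of _ "V \<times> V"])
      obtain v0 where "v0 \<in> V" using False by blast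
      then obtain i0 where "i0 \<in> V" "i0 \<noteq> v0" using hB by blast
      then have neP: "(\<lambda>(x,y). d x y) ` ?P \<noteq> {}" using \<open>v0 \<in> V\<close> by auto
      have "Min ((\<lambda>(x,y). d x y) ` ?P) \<in> (\<lambda>(x,y). d x y) ` ?P" using Min_in[OF finP neP] .
      then obtain a b where ab: "a \<in> V" "b \<in> V" "a \<noteq> b" "d a b = Min ((\<lambda>(x,y). d x y) ` ?P)"
        by auto
      have mn: "\<forall>x\<in>V. \<forall>y\<in>V. x \<noteq> y \<longrightarrow> d a b \<le> d x y"
      proof (intro ballI impI)
        fix x y assume "x \<in> V" "y \<in> V" "x \<noteq> y"
        then have "d x y \<in> (\<lambda>(x,y). d x y) ` ?P" by force
        then show "d a b \<le> d x y" using ab(4) Min_le[OF finP] by auto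
      qed
      have sym: "\<forall>x\<in>V. \<forall>y\<in>V. d x y = d y x" using psubset.prems by blast
      have s1: "d b a = d a b" using sym ab(1,2) by blast
      have m1: "\<forall>k\<in>V. k \<noteq> a \<longrightarrow> d a b \<le> d k a" using mn ab(1) by blast
      have m2: "\<forall>k\<in>V. k \<noteq> b \<longrightarrow> d a b \<le> d k b" using mn ab(2) by blast
      have nab: "near V d a b" unfolding near_def using ab(2,3) s1 m1 by auto
      have nba: "near V d b a" unfolding near_def using ab(1,3) m2 by auto
      have hB': "\<forall>v\<in>V. \<exists>i. i \<in> V \<and> i \<noteq> v \<and> (\<exists>k\<in>V. k \<noteq> i) \<and> (\<forall>j. near V d i j \<longrightarrow> j = v)"
        using hB by blast
      obtain g where g: "\<forall>v\<in>V. g v \<in> V \<and> g v \<noteq> v \<and> (\<exists>k\<in>V. k \<noteq> g v) \<and> (\<forall>j. near V d (g v) j \<longrightarrow> j = v)"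
        using bchoice[OF hB'] by blast
      have ex_near: "\<And>i. i \<in> V \<Longrightarrow> (\<exists>k\<in>V. k \<noteq> i) \<Longrightarrow> \<exists>j. near V d i j"
        using near_exists[OF psubset.hyps(1)] by blast
      have inj: "inj_on g V"
      proof (rule inj_onI)
        fix x y assume xy: "x \<in> V" "y \<in> V" "g x = g y"
        obtain j where "near V d (g x) j" using ex_near g xy(1) by blast
        moreover have "\<forall>j. near V d (g x) j \<longrightarrow> j = x" using g xy(1) by blast
        moreover have "\<forall>j. near V d (g y) j \<longrightarrow> j = y" using g xy(2) by blast
        ultimately show "x = y" using xy(3) by simp
      qed
      have img: "g ` V = V" using endo_inj_surj[OF psubset.hyps(1) _ inj] g by blast
      have ga: "g a = b"
      proof -
        have "b \<in> g ` V" using img ab(2) by simp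
        then obtain w where "b = g w" "w \<in> V" by (rule imageE)
        then have "w \<in> V" "g w = b" by simp_all
        moreover have "\<forall>j. near V d (g w) j \<longrightarrow> j = w" using g \<open>w \<in> V\<close> by blast
        ultimately have "w = a" using nba by simp
        then show ?thesis using \<open>g w = b\<close> by simp
      qed
      have gb: "g b = a"
      proof -
        have "a \<in> g ` V" using img ab(1) by simp
        then obtain w where "a = g w" "w \<in> V" by (rule imageE)
        then have "w \<in> V" "g w = a" by simp_all
        moreover have "\<forall>j. near V d (g w) j \<longrightarrow> j = w" using g \<open>w \<in> V\<close> by blast
        ultimately have "w = b" using nab by simp
        then show ?thesis using \<open>g w = a\<close> by simp
      qed
      let ?V' = "V - {a, b}"
      have h1: "?V' \<subset> V" using ab by auto
      have h2: "\<forall>x\<in>?V'. \<forall>y\<in>?V'. d x y = d y x" using psubset.prems by blast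
      have "\<exists>\<sigma>::nat\<Rightarrow>bool. \<forall>i\<in>?V'. (\<exists>k\<in>?V'. k \<noteq> i) \<longrightarrow> (\<exists>j. near ?V' d i j \<and> \<sigma> j \<noteq> \<sigma> i)" using psubset.IH[OF h1 h2] by blast
      then obtain \<sigma> :: "nat \<Rightarrow> bool" where
        \<sigma>: "\<forall>i\<in>?V'. (\<exists>k\<in>?V'. k \<noteq> i) \<longrightarrow> (\<exists>j. near ?V' d i j \<and> \<sigma> j \<noteq> \<sigma> i)" by (elim exE)
      define \<sigma>' where "\<sigma>' = \<sigma>(a := True, b := False)"
      show ?thesis
      proof (intro exI[of _ \<sigma>'] ballI impI)
        fix i assume i: "i \<in> V" "\<exists>k\<in>V. k \<noteq> i"
        show "\<exists>j. near V d i j \<and> \<sigma>' j \<noteq> \<sigma>' i"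
        proof (cases "i = a \<or> i = b")
          case True
          have "\<sigma>' a = True" "\<sigma>' b = False" unfolding \<sigma>'_def using ab(3) by auto
          show ?thesis
          proof (cases "i = a")
            case True
            then show ?thesis using nab \<open>\<sigma>' a = True\<close> \<open>\<sigma>' b = False\<close> by auto
          next
            case False
            then have "i = b" using \<open>i = a \<or> i = b\<close> by simp
            then show ?thesis using nba \<open>\<sigma>' a = True\<close> \<open>\<sigma>' b = False\<close> by auto
          qed
        next
          case False
          have "i \<in> g ` V" using img i(1) by simp
          then obtain v where "i = g v" "v \<in> V" by (rule imageE)
          then have v: "v \<in> V" "g v = i" by simp_all
          obtain j where "near V d i j" using ex_near i by blast
          moreover have "\<forall>j. near V d (g v) j \<longrightarrow> j = v" using g v(1) by blast
          ultimately have nv: "near V d i v" using v(2) by auto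
          have "v \<noteq> a" using v ga False by auto
          moreover have "v \<noteq> b" using v gb False by auto
          ultimately have vV': "v \<in> ?V'" "v \<noteq> i" using v nv unfolding near_def by auto
          then obtain j' where j': "near ?V' d i j'" "\<sigma> j' \<noteq> \<sigma> i"
            using \<sigma> i False by blast
          have nj': "near V d i j'"
          proof -
            have a1: "d j' i \<le> d v i" using j' vV' unfolding near_def by blast
            have a2: "\<forall>k\<in>V. k \<noteq> i \<longrightarrow> d v i \<le> d k i" using nv unfolding near_def by blast
            have a3: "j' \<in> V" "j' \<noteq> i" using j'(1) unfolding near_def by auto
            show ?thesis unfolding near_def using a1 a2 a3 by force
          qed
          have "j' \<noteq> a" "j' \<noteq> b" using j'(1) unfolding near_def by auto
          then have "\<sigma>' j' = \<sigma> j'" "\<sigma>' i = \<sigma> i" using False unfolding \<sigma>'_def by auto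
          then show ?thesis using j'(2) nj' by metis
        qed
      qed
    qed
  qed
qed


lemma lam_facts:
  assumes i: "i \<in> {1..n}" and nj: "near {1..n} \<tau> i j"
    and nn: "\<forall>a\<in>{1..n}. \<tau> a i \<ge> 0" and z: "\<tau> i i = 0"
  shows "lam n \<tau> i 0 = 0" "lam n \<tau> i 1 = \<tau> j i"
proof -
  have sp1: "[1..<n+1] = [1..<i] @ [i..<n+1]"
    using upt_add_eq_append[of 1 i "n+1-i"] i by simp
  have sp2: "[i..<n+1] = i # [Suc i..<n+1]" using i by (simp add: upt_conv_Cons)
  define f where "f = (\<lambda>j. \<tau> j i)"
  define ys where "ys = map f ([1..<i] @ [Suc i..<n+1])"
  have xs: "map f [1..<n+1] = map f [1..<i] @ 0 # map f [Suc i..<n+1]"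
    using sp1 sp2 z by (simp add: f_def)
  have ms: "mset (0 # sort ys) = mset (map f [1..<n+1])"
    unfolding xs ys_def by simp
  have su: "set ([1..<i] @ [Suc i..<n+1]) = {1..n} - {i}" using i by auto
  have setys: "set ys = f ` ({1..n} - {i})"
    unfolding ys_def set_map su by (rule refl)
  have ysnn: "\<forall>y\<in>set ys. 0 \<le> y" using nn unfolding setys f_def by auto
  have srt: "sorted (0 # sort ys)" using ysnn by simp
  have so: "sort (map f [1..<n+1]) = 0 # sort ys"
    using properties_for_sort[OF ms srt] .
  have lamdef: "lam n \<tau> i m = sort (map f [1..<n+1]) ! m" for m
    unfolding lam_def f_def by simp
  show "lam n \<tau> i 0 = 0" unfolding lamdef so by simp
  have jin: "j \<in> {1..n}" "j \<noteq> i" using nj unfolding near_def by auto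
  have fj: "f j \<in> set ys" unfolding setys using jin by auto
  have lo: "\<forall>y\<in>set ys. f j \<le> y" unfolding setys f_def using nj unfolding near_def by auto
  have ne: "sort ys \<noteq> []" using fj by (metis empty_iff list.set(1) set_sort)
  have s0: "sort ys ! 0 \<in> set ys" using ne by (metis length_greater_0_conv nth_mem set_sort)
  obtain p where p: "p < length (sort ys)" "sort ys ! p = f j"
    using fj by (metis in_set_conv_nth set_sort)
  have "sort ys ! 0 \<le> sort ys ! p" using p(1) by (intro sorted_nth_mono) auto
  then have "sort ys ! 0 = f j" using p(2) lo s0 by fastforce
  then show "lam n \<tau> i 1 = \<tau> j i" unfolding lamdef so by (simp add: f_def)
qed

lemma latency_img: "latency n \<tau> s c i = Min ((\<lambda>t. \<tau> t i) ` {t\<in>{1..n}. s t = c})"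
  unfolding latency_def by (rule arg_cong[where f=Min]) auto

theorem corollary1:
  fixes n :: nat and \<tau> :: "nat \<Rightarrow> nat \<Rightarrow> real"
  assumes "n \<ge> 2"
    and "\<forall>i\<in>{1..n}. \<forall>j\<in>{1..n}. \<tau> i j \<ge> 0"
    and "\<forall>i\<in>{1..n}. \<forall>j\<in>{1..n}. \<tau> i j = \<tau> j i"
    and "\<forall>i\<in>{1..n}. \<tau> i i = 0"
  shows "\<exists>\<sigma>. uncoded_scheme n 2 \<sigma>
           \<and> (\<forall>j\<in>{1..2}. \<exists>t\<in>{1..n}. \<sigma> t = j)
           \<and> (\<forall>i\<in>{1..n}. L_max n 2 \<tau> \<sigma> i = lam n \<tau> i 1)
           \<and> L_avg n 2 \<tau> \<sigma> = (\<Sum>i\<in>{1..n}. lam n \<tau> i 0 + lam n \<tau> i 1) / (2 * real n)"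
proof -
  obtain \<sigma> :: "nat \<Rightarrow> bool" where
    \<sigma>: "\<forall>i\<in>{1..n}. (\<exists>k\<in>{1..n}. k \<noteq> i) \<longrightarrow> (\<exists>j. near {1..n} \<tau> i j \<and> \<sigma> j \<noteq> \<sigma> i)"
    using coloring[of "{1..n}" \<tau>] assms(3) by blast
  define s where "s t = (if \<sigma> t then 1 else 2::nat)" for t
  have two: "{1..2::nat} = {1, 2}" by auto
  have other: "\<exists>j. near {1..n} \<tau> i j \<and> \<sigma> j \<noteq> \<sigma> i" if i: "i \<in> {1..n}" for i
  proof -
    have "(if i = 1 then 2 else 1) \<in> {1..n}" "(if i = 1 then 2 else 1) \<noteq> i" using assms(1) i by auto
    then show ?thesis using \<sigma> i by blast
  qed
  have key: "Max ((\<lambda>c. latency n \<tau> s c i) ` {1..2}) = lam n \<tau> i 1 \<and>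
             (\<Sum>c\<in>{1..2}. latency n \<tau> s c i) = lam n \<tau> i 0 + lam n \<tau> i 1"
    if i: "i \<in> {1..n}" for i
  proof -
    obtain j where j: "near {1..n} \<tau> i j" "\<sigma> j \<noteq> \<sigma> i" using other i by blast
    have nn: "\<forall>a\<in>{1..n}. \<tau> a i \<ge> 0" using assms(2) i by blast
    have z: "\<tau> i i = 0" using assms(4) i by blast
    have jn: "j \<in> {1..n}" "j \<noteq> i" using j(1) unfolding near_def by auto
    have l0: "lam n \<tau> i 0 = 0" and l1: "lam n \<tau> i 1 = \<tau> j i"
      using lam_facts[OF i j(1) nn z] by auto
    have tj: "\<tau> j i \<ge> 0" using nn jn by auto
    have own: "latency n \<tau> s (s i) i = 0"
      unfolding latency_img
    proof (rule Min_eqI)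
      show "finite ((\<lambda>t. \<tau> t i) ` {t \<in> {1..n}. s t = s i})" by auto
      show "\<And>y. y \<in> (\<lambda>t. \<tau> t i) ` {t \<in> {1..n}. s t = s i} \<Longrightarrow> 0 \<le> y" using nn by auto
      show "0 \<in> (\<lambda>t. \<tau> t i) ` {t \<in> {1..n}. s t = s i}" using i z by force
    qed
    have oth: "latency n \<tau> s (s j) i = \<tau> j i"
      unfolding latency_img
    proof (rule Min_eqI)
      show "finite ((\<lambda>t. \<tau> t i) ` {t \<in> {1..n}. s t = s j})" by auto
      show "\<tau> j i \<in> (\<lambda>t. \<tau> t i) ` {t \<in> {1..n}. s t = s j}" using jn by force
      fix y assume "y \<in> (\<lambda>t. \<tau> t i) ` {t \<in> {1..n}. s t = s j}"
      then obtain t where t: "t \<in> {1..n}" "s t = s j" "y = \<tau> t i" by blast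
      have "t \<noteq> i" using t(2) j(2) unfolding s_def by (auto split: if_splits)
      then show "\<tau> j i \<le> y" using j(1) t unfolding near_def by auto
    qed
    have dif: "{s i, s j} = {1, 2}" using j(2) unfolding s_def by auto
    have img: "(\<lambda>c. latency n \<tau> s c i) ` {1..2} = {0, \<tau> j i}"
      unfolding two dif[symmetric] using own oth by auto
    have sm: "(\<Sum>c\<in>{1..2}. latency n \<tau> s c i) = 0 + \<tau> j i"
    proof -
      have "s i \<noteq> s j" using dif by auto
      then have "(\<Sum>c\<in>{1..2}. latency n \<tau> s c i) = latency n \<tau> s (s i) i + latency n \<tau> s (s j) i"
        unfolding two dif[symmetric] by simp
      then show ?thesis using own oth by simp
    qed
    show ?thesis unfolding img sm l0 l1 using tj by (simp add: max_def)
  qed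
  show ?thesis
  proof (intro exI[of _ s] conjI ballI)
    show "uncoded_scheme n 2 s" unfolding uncoded_scheme_def s_def by auto
  next
    fix c :: nat assume c: "c \<in> {1..2}"
    have i1: "1 \<in> {1..n}" using assms(1) by auto
    obtain j where j: "near {1..n} \<tau> 1 j" "\<sigma> j \<noteq> \<sigma> 1" using other[OF i1] by blast
    have jn: "j \<in> {1..n}" using j(1) unfolding near_def by auto
    have "{s 1, s j} = {1, 2}" using j(2) unfolding s_def by auto
    then have "c = s 1 \<or> c = s j" using c two by auto
    then show "\<exists>t\<in>{1..n}. s t = c" using i1 jn by blast
  next
    fix i assume "i \<in> {1..n}"
    then show "L_max n 2 \<tau> s i = lam n \<tau> i 1" unfolding L_max_def using key by blast
  next
    have "(\<Sum>i\<in>{1..n}. \<Sum>c\<in>{1..2}. latency n \<tau> s c i) = (\<Sum>i\<in>{1..n}. lam n \<tau> i 0 + lam n \<tau> i 1)"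
      using key by (intro sum.cong) auto
    then show "L_avg n 2 \<tau> s = (\<Sum>i\<in>{1..n}. lam n \<tau> i 0 + lam n \<tau> i 1) / (2 * real n)"
      unfolding L_avg_def by simp
  qed
qed

end
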